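(* Let $p\geq r\geq2$ and let $A$ be a symmetric nonnegative $r$-matrix of order $n$. If $\mathbf{x}=(x_1,\ldots,x_n)$ is a positive vector with $|\mathbf{x}|_p=1$ satisfying \[ \lambda x_k^{p-1}=\frac1r\frac{\partial P_A(\mathbf{x})}{\partial x_k},\qquad k=1,\ldots,n, \] for some real $\lambda$, then $\lambda=\lambda^{(p)}(A)$.
   Context: A cubical $r$-matrix of order $n$ is a function $A$ on $[n]^r$ with entries $a_{i_1,\ldots,i_r}$; symmetric means invariant under permutations of indices. $P_A(\mathbf{x})=\sum a_{i_1,\ldots,i_r}x_{i_1}\cdots x_{i_r}$ and $\lambda^{(p)}(A)=\max\{P_A(\mathbf{x}):\mathbf{x}\in\mathbb{R}^n,\ |\mathbf{x}|_p=1\}$. *)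

theory Defs
  imports "HOL-Analysis.Analysis" "HOL-Library.Multiset"
begin

text \<open>A cubical r-matrix of order n is a function on index lists of length r with
entries in {0..<n}; vectors of R^n are functions nat => real supported on {..<n}.\<close>

definition idx :: "nat \<Rightarrow> nat \<Rightarrow> nat list set" where
  "idx r n = {is. length is = r \<and> set is \<subseteq> {..<n}}"

definition symmetric_rmatrix :: "nat \<Rightarrow> nat \<Rightarrow> (nat list \<Rightarrow> real) \<Rightarrow> bool" where
  "symmetric_rmatrix r n A \<longleftrightarrow>
     (\<forall>is\<in>idx r n. \<forall>js. mset js = mset is \<longrightarrow> A js = A is)"

definition nonneg_rmatrix :: "nat \<Rightarrow> nat \<Rightarrow> (nat list \<Rightarrow> real) \<Rightarrow> bool" where
  "nonneg_rmatrix r n A \<longleftrightarrow> (\<forall>is\<in>idx r n. A is \<ge> 0)"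

definition PA :: "nat \<Rightarrow> nat \<Rightarrow> (nat list \<Rightarrow> real) \<Rightarrow> (nat \<Rightarrow> real) \<Rightarrow> real" where
  "PA r n A x = (\<Sum>is\<in>idx r n. A is * (\<Prod>j<r. x (is ! j)))"

definition pnorm :: "real \<Rightarrow> nat \<Rightarrow> (nat \<Rightarrow> real) \<Rightarrow> real" where
  "pnorm p n x = (\<Sum>i<n. \<bar>x i\<bar> powr p) powr (1 / p)"

definition lambda_p :: "real \<Rightarrow> nat \<Rightarrow> nat \<Rightarrow> (nat list \<Rightarrow> real) \<Rightarrow> real" where
  "lambda_p p r n A =
     (SUP x\<in>{x. (\<forall>i\<ge>n. x i = 0) \<and> pnorm p n x = 1}. PA r n A x)"

end

theory Submission imports Defs begin

lemma amgm_r: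
  fixes u :: "nat \<Rightarrow> real"
  assumes "r \<ge> 1" "\<And>j. j < r \<Longrightarrow> u j \<ge> 0"
  shows "(\<Prod>j<r. u j) \<le> (\<Sum>j<r. u j ^ r) / r"
proof -
  have "(\<Prod>j<r. u j ^ r) powr (1 / card {..<r}) \<le> (\<Sum>j<r. u j ^ r / card {..<r})"
    using assms by (intro arith_geom_mean) (auto simp: lessThan_empty_iff)
  moreover have "(\<Prod>j<r. u j ^ r) = (\<Prod>j<r. u j) ^ r" by (simp add: prod_power_distrib)
  moreover have w0: "(\<Prod>j<r. u j) \<ge> 0" using assms by (auto intro: prod_nonneg)
  moreover have "((\<Prod>j<r. u j) ^ r) powr (1 / r) = (\<Prod>j<r. u j)"
  proof (cases "(\<Prod>j<r. u j) = 0")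
    case True then show ?thesis using assms by (simp only: True) simp
  next
    case False
    then have "(\<Prod>j<r. u j) > 0" using w0 by linarith
    then show ?thesis using assms
      by (simp add: powr_realpow[symmetric] powr_powr)
  qed
  ultimately show ?thesis by (simp add: sum_divide_distrib)
qed

lemma young_r:
  fixes a b p :: real and r :: nat
  assumes "a \<ge> 0" "b > 0" "r \<ge> 1" "real r \<le> p"
  shows "(a / b) ^ r * b powr p \<le> (r / p) * a powr p + (1 - r / p) * b powr p"
proof (cases "a = 0")
  case True
  then show ?thesis using assms by (simp add: zero_power)
next
  case False
  then have a: "a > 0" using assms by simp
  have p: "p > 0" using assms by simp
  have "(a / b) ^ r * b powr p = a powr r * b powr (p - r)"
    using a assms by (simp add: powr_realpow[symmetric] powr_divide powr_diff)
  also have "\<dots> = (a powr p) powr (r / p) * (b powr p) powr (1 - r / p)"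
    using p by (simp add: powr_powr algebra_simps)
  also have "\<dots> \<le> (r / p) * a powr p + (1 - r / p) * b powr p"
    using a assms p by (intro Youngs_inequality_0) auto
  finally show ?thesis .
qed

theorem proposition13:
  fixes p :: real and r n :: nat and A :: "nat list \<Rightarrow> real"
    and x :: "nat \<Rightarrow> real" and lam :: real
  assumes "2 \<le> r" and "real r \<le> p"
    and "symmetric_rmatrix r n A" and "nonneg_rmatrix r n A"
    and "\<forall>i<n. x i > 0" and "\<forall>i\<ge>n. x i = 0"
    and "pnorm p n x = 1"
    and "\<forall>k<n. lam * x k powr (p - 1)
                = (1 / real r) * deriv (\<lambda>t. PA r n A (x(k := t))) (x k)"
  shows "lam = lambda_p p r n A"
proof -
  note xpos = assms(5)
  have r1: "r \<ge> 1" and rpos: "real r > 0" using assms(1) by auto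
  have ppos: "p > 0" using assms(1,2) by simp
  define I where "I = idx r n"
  have finI: "finite I"
  proof -
    have "I \<subseteq> {xs. set xs \<subseteq> {..<n} \<and> length xs = r}" by (auto simp: I_def idx_def)
    then show ?thesis by (rule finite_subset) (simp add: finite_lists_length_eq)
  qed
  have Inth: "is ! j < n" if "is \<in> I" "j < r" for "is" j
  proof -
    have "length is = r" "set is \<subseteq> {..<n}" using that(1) by (auto simp: I_def idx_def)
    moreover have "is ! j \<in> set is" using that(2) \<open>length is = r\<close> by (intro nth_mem) simp
    ultimately show ?thesis by auto
  qed
  have Anonneg: "A is \<ge> 0" if "is \<in> I" for "is"
    using assms(4) that by (auto simp: I_def nonneg_rmatrix_def)
  define X where "X is = (\<Prod>l<r. x (is ! l))" for "is"
  have Xpos: "X is > 0" if "is \<in> I" for "is"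
    unfolding X_def using Inth[OF that] xpos by (auto intro: prod_pos)
  define D where "D k = (\<Sum>is\<in>I. A is * (\<Sum>j<r. (if is ! j = k then 1 else 0) *
      (\<Prod>l\<in>{..<r}-{j}. x (is ! l))))" for k
  define E where "E k = (\<Sum>is\<in>I. A is * X is * (\<Sum>j<r. if is ! j = k then 1 else 0))" for k
  have deriv: "deriv (\<lambda>t. PA r n A (x(k := t))) (x k) = D k" for k
  proof (rule DERIV_imp_deriv)
    have "((\<lambda>t. \<Sum>is\<in>I. A is * (\<Prod>l<r. (x(k := t)) (is ! l))) has_field_derivative D k) (at (x k))"
      unfolding D_def
    proof (intro DERIV_sum DERIV_cmult)
      fix "is" assume "is \<in> I"
      have "((\<lambda>t. \<Prod>l<r. (x(k := t)) (is ! l)) has_field_derivative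
          (\<Sum>j<r. (if is ! j = k then 1 else 0) * (\<Prod>l\<in>{..<r}-{j}. (x(k := x k)) (is ! l)))) (at (x k))"
      proof (rule has_field_derivative_prod)
        fix j assume "j \<in> {..<r}"
        show "((\<lambda>t. (x(k := t)) (is ! j)) has_field_derivative (if is ! j = k then 1 else 0)) (at (x k))"
          by (cases "is ! j = k") (auto intro!: derivative_eq_intros)
      qed
      then show "((\<lambda>t. \<Prod>l<r. (x(k := t)) (is ! l)) has_field_derivative
          (\<Sum>j<r. (if is ! j = k then 1 else 0) * (\<Prod>l\<in>{..<r}-{j}. x (is ! l)))) (at (x k))"
        by simp
    qed
    then show "((\<lambda>t. PA r n A (x(k := t))) has_field_derivative D k) (at (x k))"
      unfolding PA_def I_def by simp
  qed
  have xD: "x k * D k = E k" for k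
  proof -
    have "x k * D k = (\<Sum>is\<in>I. A is * (\<Sum>j<r. (if is ! j = k then 1 else 0) *
      (x k * (\<Prod>l\<in>{..<r}-{j}. x (is ! l)))))"
      unfolding D_def by (simp add: sum_distrib_left algebra_simps)
    also have "\<dots> = E k"
      unfolding E_def
    proof (rule sum.cong[OF refl])
      fix "is" assume "is \<in> I"
      have "(\<Sum>j<r. (if is ! j = k then 1 else 0) * (x k * (\<Prod>l\<in>{..<r}-{j}. x (is ! l))))
          = (\<Sum>j<r. X is * (if is ! j = k then 1 else 0))"
      proof (rule sum.cong[OF refl])
        fix j assume j: "j \<in> {..<r}"
        show "(if is ! j = k then 1 else 0) * (x k * (\<Prod>l\<in>{..<r}-{j}. x (is ! l))) =
            X is * (if is ! j = k then 1 else 0)"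
          using j unfolding X_def by (auto simp: prod.remove[of "{..<r}" j])
      qed
      then show "A is * (\<Sum>j<r. (if is ! j = k then 1 else 0) * (x k * (\<Prod>l\<in>{..<r}-{j}. x (is ! l))))
          = A is * X is * (\<Sum>j<r. if is ! j = k then 1 else 0)"
        by (simp add: sum_distrib_left mult.assoc)
    qed
    finally show ?thesis .
  qed
  have key: "(\<Sum>k<n. g k * E k) = (\<Sum>is\<in>I. A is * X is * (\<Sum>j<r. g (is ! j)))" for g
  proof -
    have "(\<Sum>k<n. g k * E k) = (\<Sum>k<n. \<Sum>is\<in>I. A is * X is * (\<Sum>j<r. if is ! j = k then g k else 0))"
      unfolding E_def by (simp add: sum_distrib_left mult_ac if_distrib cong: if_cong)
    also have "\<dots> = (\<Sum>is\<in>I. \<Sum>k<n. A is * X is * (\<Sum>j<r. if is ! j = k then g k else 0))"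
      by (rule sum.swap)
    also have "\<dots> = (\<Sum>is\<in>I. A is * X is * (\<Sum>k<n. \<Sum>j<r. if is ! j = k then g k else 0))"
      by (simp only: sum_distrib_left)
    also have "\<dots> = (\<Sum>is\<in>I. A is * X is * (\<Sum>j<r. \<Sum>k<n. if is ! j = k then g k else 0))"
      by (rule sum.cong[OF refl], rule arg_cong[where f="\<lambda>t. _ * t"], rule sum.swap)
    also have "\<dots> = (\<Sum>is\<in>I. A is * X is * (\<Sum>j<r. g (is ! j)))"
      by (rule sum.cong[OF refl]) (auto intro!: sum.cong simp: Inth)
    finally show ?thesis .
  qed
  have sumx: "(\<Sum>i<n. x i powr p) = 1"
  proof -
    let ?s = "\<Sum>i<n. \<bar>x i\<bar> powr p"
    have "?s powr (1/p) = 1" using assms(7) by (simp add: pnorm_def)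
    then have "?s \<noteq> 0" by auto
    moreover have "?s \<ge> 0" by (auto intro: sum_nonneg)
    ultimately have "?s = (?s powr (1/p)) powr p" using ppos by (simp add: powr_powr)
    then have "?s = 1" using \<open>?s powr (1/p) = 1\<close> by simp
    moreover have "(\<Sum>i<n. x i powr p) = ?s" using xpos by (intro sum.cong) auto
    ultimately show ?thesis by simp
  qed
  have lamE: "lam * x k powr p = E k / r" if "k < n" for k
  proof -
    have "lam * x k powr p = x k * (lam * x k powr (p - 1))"
      using xpos that powr_mult_base[of "x k" "p - 1"] by (simp add: less_imp_le mult.left_commute)
    also have "\<dots> = x k * D k / r" using assms(8) that deriv by simp
    finally show ?thesis using xD by simp
  qed
  have lamPA: "lam = PA r n A x"
  proof -
    have "lam = (\<Sum>k<n. lam * x k powr p)" using sumx by (simp add: sum_distrib_left[symmetric])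
    also have "\<dots> = (\<Sum>k<n. 1 * E k) / r" using lamE by (simp add: sum_divide_distrib)
    also have "\<dots> = (\<Sum>is\<in>I. A is * X is * r) / r" by (simp only: key) simp
    also have "\<dots> = PA r n A x" using rpos
      by (simp add: PA_def I_def X_def sum_divide_distrib)
    finally show ?thesis .
  qed
  have lam0: "lam \<ge> 0"
    unfolding lamPA PA_def using Anonneg Xpos
    by (intro sum_nonneg mult_nonneg_nonneg) (auto simp: I_def X_def less_imp_le)
  have bound: "PA r n A y \<le> lam" if y: "pnorm p n y = 1" for y
  proof -
    define u where "u k = \<bar>y k\<bar> / x k" for k
    have sumy: "(\<Sum>i<n. \<bar>y i\<bar> powr p) = 1"
    proof -
      let ?s = "\<Sum>i<n. \<bar>y i\<bar> powr p"
      have "?s powr (1/p) = 1" using y by (simp add: pnorm_def)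
      then have "?s \<noteq> 0" by auto
      moreover have "?s \<ge> 0" by (auto intro: sum_nonneg)
      ultimately have "?s = (?s powr (1/p)) powr p" using ppos by (simp add: powr_powr)
      then show "?s = 1" using \<open>?s powr (1/p) = 1\<close> by simp
    qed
    have "PA r n A y \<le> (\<Sum>is\<in>I. A is * X is * ((\<Sum>j<r. u (is ! j) ^ r) / r))"
      unfolding PA_def I_def[symmetric]
    proof (rule sum_mono)
      fix "is" assume "is": "is \<in> I"
      have "(\<Prod>j<r. y (is ! j)) \<le> (\<Prod>j<r. \<bar>y (is ! j)\<bar>)"
        by (metis abs_ge_self abs_prod)
      also have "\<dots> = X is * (\<Prod>j<r. u (is ! j))"
        unfolding X_def u_def prod.distrib[symmetric]
        using Inth[OF "is"] xpos by (intro prod.cong) (auto, metis less_irrefl)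
      also have "\<dots> \<le> X is * ((\<Sum>j<r. u (is ! j) ^ r) / r)"
        using Xpos[OF "is"] r1 xpos Inth[OF "is"]
        by (intro mult_left_mono amgm_r) (auto simp: u_def less_imp_le)
      finally show "A is * (\<Prod>j<r. y (is ! j)) \<le> A is * X is * ((\<Sum>j<r. u (is ! j) ^ r) / r)"
        using Anonneg[OF "is"] by (metis (no_types, lifting) mult_left_mono mult.assoc times_divide_eq_right)
    qed
    also have "\<dots> = (\<Sum>k<n. u k ^ r * E k) / r"
      by (simp only: key sum_divide_distrib[of _ I] times_divide_eq_right)
    also have "\<dots> = (\<Sum>k<n. u k ^ r * (lam * x k powr p))"
      using lamE rpos by (simp add: sum_divide_distrib)
    also have "\<dots> = lam * (\<Sum>k<n. (\<bar>y k\<bar> / x k) ^ r * x k powr p)"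
      by (simp add: sum_distrib_left u_def mult_ac)
    also have "\<dots> \<le> lam * (\<Sum>k<n. (r / p) * \<bar>y k\<bar> powr p + (1 - r / p) * x k powr p)"
      using lam0 xpos r1 assms(2)
      by (intro mult_left_mono sum_mono young_r) auto
    also have "\<dots> = lam"
      by (simp add: sum.distrib sum_distrib_left[symmetric] sumy sumx flip: sum_divide_distrib)
    finally show ?thesis .
  qed
  show ?thesis
    unfolding lambda_p_def
  proof (rule cSup_eq_maximum[symmetric])
    show "lam \<in> PA r n A ` {x. (\<forall>i\<ge>n. x i = 0) \<and> pnorm p n x = 1}"
      using lamPA assms(6,7) by auto
  next
    fix z assume "z \<in> PA r n A ` {x. (\<forall>i\<ge>n. x i = 0) \<and> pnorm p n x = 1}"
    then show "z \<le> lam" using bound by auto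
  qed
qed

end
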